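(* Fix a nonnegative integer $n$ and define \[ \widetilde{T}_n(a,c)=(1+a-c)_n(c)_n\,{}_3F_2\!\left(\left.{-n,\frac{a}{2},\frac{a+1}{2} \atop 1+a-c,c}\right| 4\right). \] Then, whenever both sides are defined, \[ {}_3F_2\!\left(\left.{-n,\frac{a}{2},\frac{a+1}{2} \atop 1+a-c,c}\right| 4\right) =\frac{(-1)^n(a)_n}{(1+a-c)_n}\,{}_3F_2\!\left(\left.{-n,\frac{c-a-n}{2},\frac{c-a-n+1}{2} \atop 1-a-n,c}\right| 4\right), \] so $\widetilde{T}_n(a,c)=\widetilde{T}_n(c-a-n,c)$. The group of transformations of $(a,c)$ generated by $(a,c)\mapsto(a,1+a-c)$ and $(a,c)\mapsto(c-a-n,c)$ is isomorphic to $S_3$ and yields the six invariances $\widetilde{T}_n(a,c)=\widetilde{T}_n(a,c)=\widetilde{T}_n(a,1+a-c)=\widetilde{T}_n(c-a-n,c)=\widetilde{T}_n(c-a-n,1-a-n)=\widetilde{T}_n(1-c-n,1+a-c)=\widetilde{T}_n(1-c-n,1-a-n)$. Moreover, the function \[ \widetilde{U}_n(x,y,z)=\widetilde{T}_n\!\left(\frac{1+2x-y-z-2n}{3},\frac{2+x+y-2z-n}{3}\right) \] is invariant under all six permutations of $x,y,z$.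
   Context: For $a\in\mathbb{C}$, $(a)_0=1$ and $(a)_k=a(a+1)\cdots(a+k-1)$ for $k\ge1$. The hypergeometric series is ${}_rF_s\!\left(\left.{\alpha_1,\ldots,\alpha_r\atop \beta_1,\ldots,\beta_s}\right|z\right)=\sum_{k\ge0}\frac{(\alpha_1)_k\cdots(\alpha_r)_k}{k!(\beta_1)_k\cdots(\beta_s)_k}z^k$, with no lower parameter zero or a negative integer; when an upper parameter is $-n$ it is a finite sum over $0\le k\le n$. *)

theory Defs
  imports Complex_Main "HOL-Algebra.Sym_Groups" "HOL-Algebra.Bij" "HOL-Algebra.Generated_Groups"
begin

definition lower_ok :: "complex \<Rightarrow> bool" where
  "lower_ok b \<longleftrightarrow> (\<forall>m::nat. b \<noteq> - of_nat m)"

definition F32 :: "nat \<Rightarrow> complex \<Rightarrow> complex \<Rightarrow> complex \<Rightarrow> complex \<Rightarrow> complex \<Rightarrow> complex" where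
  "F32 n a1 a2 b1 b2 z = (\<Sum>k\<le>n. pochhammer (- of_nat n) k * pochhammer a1 k * pochhammer a2 k
       / (fact k * pochhammer b1 k * pochhammer b2 k) * z ^ k)"

text \<open>T~_n(a,c) = (1+a-c)_n (c)_n 3F2(-n,a/2,(a+1)/2;1+a-c,c;4), with denominators cleared,
  i.e. its polynomial extension in (a,c) (using (b)_n/(b)_k = (b+k)_(n-k)).\<close>
definition Tt :: "nat \<Rightarrow> complex \<Rightarrow> complex \<Rightarrow> complex" where
  "Tt n a c = (\<Sum>k\<le>n. pochhammer (- of_nat n) k * pochhammer (a/2) k * pochhammer ((a+1)/2) k
       / fact k * pochhammer (1 + a - c + of_nat k) (n - k) * pochhammer (c + of_nat k) (n - k) * 4 ^ k)"

definition Ut :: "nat \<Rightarrow> complex \<Rightarrow> complex \<Rightarrow> complex \<Rightarrow> complex" where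
  "Ut n x y z = Tt n ((1 + 2*x - y - z - 2 * of_nat n) / 3) ((2 + x + y - 2*z - of_nat n) / 3)"

definition sig1 :: "complex \<times> complex \<Rightarrow> complex \<times> complex" where
  "sig1 = (\<lambda>(a, c). (a, 1 + a - c))"

definition sig2 :: "nat \<Rightarrow> complex \<times> complex \<Rightarrow> complex \<times> complex" where
  "sig2 n = (\<lambda>(a, c). (c - a - of_nat n, c))"

end

theory Submission
  imports Defs "HOL-Computational_Algebra.Formal_Power_Series"
begin


definition ff :: "complex \<Rightarrow> nat \<Rightarrow> complex" where
  "ff x m = (\<Prod>i = 0..<m. x - of_nat i)"

lemma ff_0[simp]: "ff x 0 = 1" by (simp add: ff_def)
lemma ff_Suc: "ff x (Suc m) = ff x m * (x - of_nat m)"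
  by (simp add: ff_def)

lemma ff_gchoose: "ff x m = fact m * (x gchoose m)"
  by (simp add: ff_def gbinomial_mult_fact)

lemma ff_add: "ff x (m + p) = ff x m * ff (x - of_nat m) p"
  by (induction p) (auto simp: ff_Suc algebra_simps)

lemma poch_ff: "pochhammer x m = ff (x + of_nat m - 1) m"
proof (induction m arbitrary: x)
  case 0 then show ?case by simp
next
  case (Suc m)
  have "x + 1 + of_nat m - 1 = x + of_nat m" by simp
  then show ?case using Suc[of "x+1"] by (simp add: pochhammer_rec ff_Suc algebra_simps)
qed

lemma poch_neg: "pochhammer x m = (-1)^m * ff (-x) m"
  by (induction m) (auto simp: pochhammer_Suc ff_Suc algebra_simps)

lemma ff_vandermonde:
  "ff (x + y) m = (\<Sum>i\<le>m. of_nat (m choose i) * ff x i * ff y (m - i))"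
proof -
  have "ff (x + y) m = fact m * ((x + y) gchoose m)" by (rule ff_gchoose)
  also have "\<dots> = fact m * (\<Sum>k\<in>{0..m}. (x gchoose k) * (y gchoose (m - k)))"
    by (simp add: gbinomial_Vandermonde)
  also have "\<dots> = (\<Sum>i\<le>m. of_nat (m choose i) * ff x i * ff y (m - i))"
    unfolding sum_distrib_left atMost_atLeast0
  proof (rule sum.cong[OF refl])
    fix k assume "k \<in> {0..m}"
    then have k: "k \<le> m" by simp
    have "fact m = (of_nat (fact k * fact (m - k) * (m choose k)) :: complex)"
      using binomial_fact_lemma[OF k] by (metis of_nat_fact)
    then show "fact m * ((x gchoose k) * (y gchoose (m - k))) =
         of_nat (m choose k) * ff x k * ff y (m - k)"
      by (simp add: ff_gchoose of_nat_mult)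
  qed
  finally show ?thesis .
qed

lemma Tt_ff: "Tt n a c = (-1)^n * (\<Sum>k\<le>n. of_nat (n choose k) * ff (-a) (2*k)
     * ff (a - c + of_nat n) (n-k) * ff (-c - of_nat k) (n-k))"
  unfolding Tt_def sum_distrib_left
proof (rule sum.cong[OF refl])
  fix k assume "k \<in> {..n}"
  then have k: "k \<le> n" by simp
  have e1: "pochhammer (- of_nat n) k / fact k = ((-1)^k * of_nat (n choose k) :: complex)"
    by (simp add: poch_neg ff_gchoose binomial_gbinomial)
  have e2: "pochhammer (a/2) k * pochhammer ((a+1)/2) k * 4^k = ff (-a) (2*k)"
  proof -
    have "pochhammer (2*(a/2)) (2*k) = of_nat (2^(2*k)) * pochhammer (a/2) k * pochhammer (a/2+1/2) k"
      by (rule pochhammer_double)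
    moreover have "a/2 + 1/2 = (a+1)/2" by (simp add: field_simps)
    moreover have "(2::complex)^(2*k) = 4^k" by (simp add: power_mult)
    ultimately have "pochhammer a (2*k) = pochhammer (a/2) k * pochhammer ((a+1)/2) k * 4^k"
      by simp
    then show ?thesis by (simp add: poch_neg)
  qed
  have e3: "pochhammer (1 + a - c + of_nat k) (n - k) = ff (a - c + of_nat n) (n-k)"
    using k by (simp add: poch_ff of_nat_diff algebra_simps)
  have e4: "pochhammer (c + of_nat k) (n - k) = (-1)^(n-k) * ff (-c - of_nat k) (n-k)"
    by (simp add: poch_neg)
  have e5: "(-1::complex)^k * (-1)^(n-k) = (-1)^n"
    using k by (simp add: power_add[symmetric])
  have "pochhammer (- of_nat n) k * pochhammer (a / 2) k * pochhammer ((a + 1) / 2) k / fact k *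
      pochhammer (1 + a - c + of_nat k) (n - k) * pochhammer (c + of_nat k) (n - k) * 4 ^ k
      = (pochhammer (- of_nat n) k / fact k) * (pochhammer (a/2) k * pochhammer ((a+1)/2) k * 4^k)
        * pochhammer (1 + a - c + of_nat k) (n - k) * pochhammer (c + of_nat k) (n - k)"
    by (simp add: field_simps)
  also have "\<dots> = ((-1)^k * (-1)^(n-k)) * (of_nat (n choose k) * ff (-a) (2*k)
     * ff (a - c + of_nat n) (n-k) * ff (-c - of_nat k) (n-k))"
    unfolding e1 e2 e3 e4 by (simp add: algebra_simps)
  finally show "pochhammer (- of_nat n) k * pochhammer (a / 2) k * pochhammer ((a + 1) / 2) k / fact k *
      pochhammer (1 + a - c + of_nat k) (n - k) * pochhammer (c + of_nat k) (n - k) * 4 ^ k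
      = (-1)^n * (of_nat (n choose k) * ff (-a) (2*k)
     * ff (a - c + of_nat n) (n-k) * ff (-c - of_nat k) (n-k))"
    unfolding e5 .
qed


lemma ff_double:
  assumes k: "k \<le> n"
  shows "ff D (2*k) * ff B (n-k) * ff (B + D - of_nat n - of_nat k) (n-k)
    = (\<Sum>i\<le>n-k. of_nat ((n-k) choose i) * ff D (2*k+i) * ff B (2*(n-k-i)+i))"
proof -
  have "B + D - of_nat n - of_nat k = (D - of_nat (2*k)) + (B - of_nat (n-k))"
    using k by (simp add: of_nat_diff algebra_simps)
  then have "ff (B + D - of_nat n - of_nat k) (n-k) =
     (\<Sum>i\<le>n-k. of_nat ((n-k) choose i) * ff (D - of_nat (2*k)) i * ff (B - of_nat (n-k)) (n-k - i))"
    by (subst \<open>B + D - of_nat n - of_nat k = _\<close>) (rule ff_vandermonde)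
  then have "ff D (2*k) * ff B (n-k) * ff (B + D - of_nat n - of_nat k) (n-k) =
     (\<Sum>i\<le>n-k. of_nat ((n-k) choose i) * (ff D (2*k) * ff (D - of_nat (2*k)) i) *
        (ff B (n-k) * ff (B - of_nat (n-k)) (n-k - i)))"
    by (simp add: sum_distrib_left algebra_simps)
  also have "\<dots> = (\<Sum>i\<le>n-k. of_nat ((n-k) choose i) * ff D (2*k+i) * ff B (2*(n-k-i)+i))"
  proof (rule sum.cong[OF refl])
    fix i assume "i \<in> {..n-k}"
    then have i: "i \<le> n - k" by simp
    have "ff D (2*k) * ff (D - of_nat (2*k)) i = ff D (2*k+i)" by (simp add: ff_add)
    moreover have "ff B (n-k) * ff (B - of_nat (n-k)) (n-k - i) = ff B (2*(n-k-i)+i)"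
    proof -
      have "2*(n-k-i)+i = (n-k) + (n-k-i)" using i by simp
      then show ?thesis by (simp only: ff_add)
    qed
    ultimately show "of_nat ((n-k) choose i) * (ff D (2*k) * ff (D - of_nat (2*k)) i) *
        (ff B (n-k) * ff (B - of_nat (n-k)) (n-k - i)) =
        of_nat ((n-k) choose i) * ff D (2*k+i) * ff B (2*(n-k-i)+i)" by simp
  qed
  finally show ?thesis .
qed

definition SS :: "nat \<Rightarrow> complex \<Rightarrow> complex \<Rightarrow> complex" where
  "SS n B D = (\<Sum>(k,i)\<in>Sigma {..n} (\<lambda>k. {..n-k}).
      of_nat ((n choose k) * ((n - k) choose i)) * ff D (2*k + i) * ff B (2*(n - k - i) + i))"

lemma binom_swap:
  assumes "k + i \<le> n"
  shows "(n choose k) * ((n - k) choose i) = (n choose (n-k-i)) * ((n - (n-k-i)) choose i)"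
proof -
  have "(n choose (k+i)) * ((k+i) choose k) = (n choose k) * ((n - k) choose ((k+i) - k))"
    by (rule choose_mult) (use assms in auto)
  moreover have "n choose (n-k-i) = n choose (k+i)"
    using assms binomial_symmetric[of "k+i" n] by (simp add: diff_diff_add)
  moreover have "n - (n-k-i) = k + i" using assms by simp
  moreover have "(k+i) choose i = (k+i) choose k"
    using binomial_symmetric[of i "k+i"] by simp
  ultimately show ?thesis by (simp add: mult.commute)
qed

lemma SS_term:
  assumes "k + i \<le> n"
  shows "of_nat ((n choose (n-k-i)) * ((n - (n-k-i)) choose i)) * ff B (2*(n-k-i) + i) * ff D (2*(n - (n-k-i) - i) + i)
    = of_nat ((n choose k) * ((n - k) choose i)) * ff D (2*k + i) * ff B (2*(n - k - i) + i)"
proof -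
  have "n - (n - k - i) - i = k" using assms by simp
  moreover have "(n choose k) * ((n - k) choose i) = (n choose (n-k-i)) * ((n - (n-k-i)) choose i)"
    using assms by (intro binom_swap) simp
  ultimately show ?thesis by (simp add: mult.commute)
qed

lemma SS_sym: "SS n B D = SS n D B"
  unfolding SS_def
  apply (rule sum.reindex_bij_witness[where i = "\<lambda>(k,i). (n-k-i, i)" and j = "\<lambda>(k,i). (n-k-i, i)"])
  subgoal by auto
  subgoal by auto
  subgoal by auto
  subgoal by auto
  subgoal for p
    apply (cases p)
    apply (simp only: prod.case)
    apply (rule SS_term)
    apply auto
    done
  done

lemma Tt_SS: "Tt n a c = (-1)^n * SS n (a - c + of_nat n) (-a)"
proof -
  have "Tt n a c = (-1)^n * (\<Sum>k\<le>n. of_nat (n choose k) * (ff (-a) (2*k)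
     * ff (a - c + of_nat n) (n-k) * ff ((a - c + of_nat n) + (-a) - of_nat n - of_nat k) (n-k)))"
    unfolding Tt_ff by (simp add: algebra_simps)
  also have "\<dots> = (-1)^n * (\<Sum>k\<le>n. \<Sum>i\<le>n-k. of_nat (n choose k) * (of_nat ((n-k) choose i) *
      ff (-a) (2*k+i) * ff (a - c + of_nat n) (2*(n-k-i)+i)))"
  proof -
    have "ff (-a) (2*k) * ff (a - c + of_nat n) (n-k) * ff ((a - c + of_nat n) + (-a) - of_nat n - of_nat k) (n-k)
      = (\<Sum>i\<le>n-k. of_nat ((n-k) choose i) * ff (-a) (2*k+i) * ff (a - c + of_nat n) (2*(n-k-i)+i))"
      if "k \<le> n" for k using ff_double[OF that] by blast
    then show ?thesis by (simp add: sum_distrib_left mult.assoc)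
  qed
  also have "\<dots> = (-1)^n * (\<Sum>k\<le>n. \<Sum>i\<le>n-k. of_nat ((n choose k) * ((n-k) choose i)) *
      ff (-a) (2*k+i) * ff (a - c + of_nat n) (2*(n-k-i)+i))"
    by (simp add: mult.assoc)
  also have "\<dots> = (-1)^n * SS n (a - c + of_nat n) (-a)"
    unfolding SS_def by (subst sum.Sigma) auto
  finally show ?thesis .
qed

lemma Tt_sym2: "Tt n a c = Tt n (c - a - of_nat n) c"
proof -
  have "Tt n (c - a - of_nat n) c = (-1)^n * SS n (-a) (a - c + of_nat n)"
    unfolding Tt_SS by (simp add: algebra_simps)
  then show ?thesis by (simp add: Tt_SS SS_sym)
qed

lemma Tt_sym1: "Tt n a (1 + a - c) = Tt n a c"
  unfolding Tt_def by (simp add: algebra_simps)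


lemma lower_ok_poch: "lower_ok b \<Longrightarrow> pochhammer b m \<noteq> 0"
  unfolding lower_ok_def by (auto simp: pochhammer_eq_0_iff)

lemma Tt_F32:
  assumes "lower_ok (1 + a - c)" "lower_ok c"
  shows "Tt n a c = pochhammer (1 + a - c) n * pochhammer c n * F32 n (a/2) ((a+1)/2) (1 + a - c) c 4"
  unfolding Tt_def F32_def sum_distrib_left
proof (rule sum.cong[OF refl])
  fix k assume "k \<in> {..n}"
  then have k: "k \<le> n" by simp
  define b where "b = 1 + a - c"
  have b0: "pochhammer b k \<noteq> 0" and c0: "pochhammer c k \<noteq> 0"
    using assms lower_ok_poch unfolding b_def by auto
  have pb: "pochhammer b n = pochhammer b k * pochhammer (b + of_nat k) (n - k)"
    and pc: "pochhammer c n = pochhammer c k * pochhammer (c + of_nat k) (n - k)"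
    using k by (simp_all add: pochhammer_product)
  have f0: "(fact k :: complex) \<noteq> 0" by simp
  show "pochhammer (- of_nat n) k * pochhammer (a / 2) k * pochhammer ((a + 1) / 2) k / fact k *
         pochhammer (1 + a - c + of_nat k) (n - k) * pochhammer (c + of_nat k) (n - k) * 4 ^ k =
         pochhammer (1 + a - c) n * pochhammer c n *
         (pochhammer (- of_nat n) k * pochhammer (a / 2) k * pochhammer ((a + 1) / 2) k /
          (fact k * pochhammer (1 + a - c) k * pochhammer c k) * 4 ^ k)"
    unfolding b_def[symmetric] pb pc using b0 c0 f0 by (simp add: field_simps)
qed

lemma part1:
  assumes "lower_ok (1 + a - c)" "lower_ok c" "lower_ok (1 - a - of_nat n)"
  shows "F32 n (a/2) ((a+1)/2) (1 + a - c) c 4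
        = (-1) ^ n * pochhammer a n / pochhammer (1 + a - c) n
          * F32 n ((c - a - of_nat n)/2) ((c - a - of_nat n + 1)/2) (1 - a - of_nat n) c 4"
proof -
  have e: "1 + (c - a - of_nat n) - c = 1 - a - of_nat n" by simp
  have T2: "Tt n (c - a - of_nat n) c = pochhammer (1 - a - of_nat n) n * pochhammer c n *
      F32 n ((c - a - of_nat n)/2) ((c - a - of_nat n + 1)/2) (1 - a - of_nat n) c 4"
    using Tt_F32[of "c - a - of_nat n" c n] assms unfolding e by simp
  have p: "pochhammer (1 - a - of_nat n) n = (-1)^n * pochhammer a n"
    using pochhammer_minus'[of "-a" n] by (simp add: algebra_simps)
  have b0: "pochhammer (1 + a - c) n \<noteq> 0" and c0: "pochhammer c n \<noteq> 0"
    using assms lower_ok_poch by auto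
  have "pochhammer (1 + a - c) n * pochhammer c n * F32 n (a/2) ((a+1)/2) (1 + a - c) c 4
     = Tt n a c" using Tt_F32[of a c n] assms by simp
  also have "\<dots> = Tt n (c - a - of_nat n) c" by (rule Tt_sym2)
  also have "\<dots> = (-1)^n * pochhammer a n * pochhammer c n *
      F32 n ((c - a - of_nat n)/2) ((c - a - of_nat n + 1)/2) (1 - a - of_nat n) c 4"
    unfolding T2 p by simp
  finally have "pochhammer (1 + a - c) n * pochhammer c n * F32 n (a/2) ((a+1)/2) (1 + a - c) c 4
     = (-1)^n * pochhammer a n * pochhammer c n *
      F32 n ((c - a - of_nat n)/2) ((c - a - of_nat n + 1)/2) (1 - a - of_nat n) c 4" .
  then show ?thesis using b0 c0 by (simp add: field_simps)
qed

lemma part5: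
  "Tt n a c = Tt n a (1 + a - c)
         \<and> Tt n a c = Tt n (c - a - of_nat n) c
         \<and> Tt n a c = Tt n (c - a - of_nat n) (1 - a - of_nat n)
         \<and> Tt n a c = Tt n (1 - c - of_nat n) (1 + a - c)
         \<and> Tt n a c = Tt n (1 - c - of_nat n) (1 - a - of_nat n)"
proof -
  have s1: "Tt n a c = Tt n a (1 + a - c)" by (simp add: Tt_sym1)
  have s2: "Tt n a c = Tt n (c - a - of_nat n) c" by (rule Tt_sym2)
  have s3: "Tt n (c - a - of_nat n) c = Tt n (c - a - of_nat n) (1 - a - of_nat n)"
    using Tt_sym1[of n "c - a - of_nat n" c] by (simp add: algebra_simps)
  have s4: "Tt n a (1 + a - c) = Tt n (1 - c - of_nat n) (1 + a - c)"
    using Tt_sym2[of n a "1 + a - c"] by (simp add: algebra_simps)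
  have s5: "Tt n (1 - c - of_nat n) (1 + a - c) = Tt n (1 - c - of_nat n) (1 - a - of_nat n)"
    using Tt_sym1[of n "1 - c - of_nat n" "1 + a - c"] by (simp add: algebra_simps)
  show ?thesis using s1 s2 s3 s4 s5 by simp
qed

lemma Tt_cong: "a1 = a2 \<Longrightarrow> c1 = c2 \<Longrightarrow> Tt n a1 c1 = Tt n a2 c2" by simp

lemma part6:
  "Ut n x y z = Ut n x z y \<and> Ut n x y z = Ut n y x z \<and> Ut n x y z = Ut n y z x
         \<and> Ut n x y z = Ut n z x y \<and> Ut n x y z = Ut n z y x"
proof -
  define a where "a = (1 + 2*x - y - z - 2 * of_nat n) / (3::complex)"
  define c where "c = (2 + x + y - 2*z - of_nat n) / (3::complex)"
  have u: "Ut n x y z = Tt n a c" unfolding Ut_def a_def c_def ..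
  have f1: "Ut n x z y = Tt n a (1 + a - c)" unfolding Ut_def a_def c_def
    by (rule Tt_cong) (simp_all add: field_simps)
  have f2: "Ut n y x z = Tt n (c - a - of_nat n) c" unfolding Ut_def a_def c_def
    by (rule Tt_cong) (simp_all add: field_simps)
  have f3: "Ut n y z x = Tt n (c - a - of_nat n) (1 - a - of_nat n)" unfolding Ut_def a_def c_def
    by (rule Tt_cong) (simp_all add: field_simps)
  have f4: "Ut n z x y = Tt n (1 - c - of_nat n) (1 + a - c)" unfolding Ut_def a_def c_def
    by (rule Tt_cong) (simp_all add: field_simps)
  have f5: "Ut n z y x = Tt n (1 - c - of_nat n) (1 - a - of_nat n)" unfolding Ut_def a_def c_def
    by (rule Tt_cong) (simp_all add: field_simps)
  from part5[of n a c] show ?thesis unfolding u f1 f2 f3 f4 f5 by blast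
qed



definition crd :: "nat \<Rightarrow> nat \<Rightarrow> complex \<times> complex \<Rightarrow> complex" where
  "crd n i p = (if i = 1 then 1 + fst p - snd p else if i = 2 then snd p else 1 - fst p - of_nat n)"

definition Prp :: "nat \<Rightarrow> (complex \<times> complex \<Rightarrow> complex \<times> complex) \<Rightarrow> (nat \<Rightarrow> nat) \<Rightarrow> bool" where
  "Prp n f \<pi> \<longleftrightarrow> \<pi> permutes {1..3} \<and> (\<forall>p. \<forall>i\<in>{1..3}. crd n (\<pi> i) (f p) = crd n i p)"

lemma three: "{1..3::nat} = {1,2,3}" by auto

lemma crd_inj:
  assumes "j \<in> {1..3}" "k \<in> {1..3}" "\<forall>q. crd n j q = crd n k q"
  shows "j = k"
proof -
  have a: "crd n j (0,0) = crd n k (0,0)" "crd n j (2,0) = crd n k (2,0)" using assms(3) by auto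
  have ne: "(3::complex) \<noteq> 1 - 2 - of_nat n" "(0::complex) \<noteq> 1 - 2 - of_nat n"
  proof
    assume "(3::complex) = 1 - 2 - of_nat n"
    then have "Re (3::complex) = Re (1 - 2 - of_nat n)" by (rule arg_cong)
    then show False by simp
  next
    show "(0::complex) \<noteq> 1 - 2 - of_nat n"
    proof
      assume "(0::complex) = 1 - 2 - of_nat n"
      then have "Re (0::complex) = Re (1 - 2 - of_nat n)" by (rule arg_cong)
      then show False by simp
    qed
  qed
  have ne2: "- (of_nat n :: complex) \<noteq> 4" "(-1::complex) \<noteq> of_nat n"
  proof
    assume "- (of_nat n :: complex) = 4"
    then have "Re (- (of_nat n :: complex)) = Re 4" by (rule arg_cong)
    then show False by simp
  next
    show "(-1::complex) \<noteq> of_nat n"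
    proof
      assume "(-1::complex) = of_nat n"
      then have "Re (-1::complex) = Re (of_nat n)" by (rule arg_cong)
      then show False by simp
    qed
  qed
  show ?thesis using assms(1,2) a ne unfolding three crd_def
    by auto
qed

lemma Prp_unique:
  assumes "surj f" "Prp n f \<pi>" "Prp n f \<sigma>"
  shows "\<pi> = \<sigma>"
proof
  fix i
  show "\<pi> i = \<sigma> i"
  proof (cases "i \<in> {1..3}")
    case True
    have all: "\<forall>q. crd n (\<pi> i) q = crd n (\<sigma> i) q"
    proof
      fix q
      obtain p where "q = f p" using assms(1) by (metis surj_def)
      moreover have "crd n (\<pi> i) (f p) = crd n i p" using assms(2) True unfolding Prp_def by blast
      moreover have "crd n (\<sigma> i) (f p) = crd n i p" using assms(3) True unfolding Prp_def by blast
      ultimately show "crd n (\<pi> i) q = crd n (\<sigma> i) q" by simp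
    qed
    have pp: "\<pi> permutes {1..3}" "\<sigma> permutes {1..3}" using assms(2,3) unfolding Prp_def by blast+
    have "\<pi> i \<in> {1..3}" using permutes_in_image[OF pp(1), of i] True by simp
    moreover have "\<sigma> i \<in> {1..3}" using permutes_in_image[OF pp(2), of i] True by simp
    ultimately show ?thesis using crd_inj all by blast
  next
    case False
    have pp: "\<pi> permutes {1..3}" "\<sigma> permutes {1..3}" using assms(2,3) unfolding Prp_def by blast+
    show ?thesis using permutes_not_in[OF pp(1) False] permutes_not_in[OF pp(2) False] by simp
  qed
qed

lemma Prp_comp:
  assumes "Prp n f \<pi>" "Prp n g \<sigma>"
  shows "Prp n (f \<circ> g) (\<pi> \<circ> \<sigma>)"
  unfolding Prp_def
proof (intro conjI allI ballI)
  show "\<pi> \<circ> \<sigma> permutes {1..3}" using assms unfolding Prp_def by (blast intro: permutes_compose)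
  fix p and i :: nat assume i: "i \<in> {1..3}"
  have pp: "\<sigma> permutes {1..3}" using assms(2) unfolding Prp_def by blast
  have "\<sigma> i \<in> {1..3}" using permutes_in_image[OF pp, of i] i by simp
  then have "crd n (\<pi> (\<sigma> i)) (f (g p)) = crd n (\<sigma> i) (g p)" using assms(1) unfolding Prp_def by blast
  also have "\<dots> = crd n i p" using assms(2) i unfolding Prp_def by blast
  finally show "crd n ((\<pi> \<circ> \<sigma>) i) ((f \<circ> g) p) = crd n i p" by simp
qed

lemma Prp_inj:
  assumes "Prp n f \<pi>" "Prp n g \<pi>"
  shows "f = g"
proof
  fix p
  have "\<forall>j\<in>{1..3}. crd n j (f p) = crd n j (g p)"
  proof
    fix j :: nat assume j: "j \<in> {1..3}"
    have pp: "\<pi> permutes {1..3}" using assms unfolding Prp_def by auto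
    obtain i where i: "j = \<pi> i" using permutes_surj[OF pp] by (metis surj_def)
    then have "i \<in> {1..3}" using j permutes_in_image[OF pp, of i] by blast
    then have "crd n (\<pi> i) (f p) = crd n i p" "crd n (\<pi> i) (g p) = crd n i p"
      using assms unfolding Prp_def by blast+
    then show "crd n j (f p) = crd n j (g p)" using i by simp
  qed
  then have "crd n 2 (f p) = crd n 2 (g p)" "crd n 3 (f p) = crd n 3 (g p)" by auto
  then show "f p = g p" unfolding crd_def by (simp add: prod_eq_iff)
qed

lemma sig1_inv: "sig1 (sig1 p) = p" by (auto simp: sig1_def split: prod.splits)
lemma sig2_inv: "sig2 n (sig2 n p) = p" by (auto simp: sig2_def split: prod.splits)

lemma Prp_sig1: "Prp n sig1 (Transposition.transpose 1 2)"
  unfolding Prp_def three by (auto intro: permutes_swap_id simp: crd_def sig1_def split: prod.splits)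

lemma Prp_sig2: "Prp n (sig2 n) (Transposition.transpose 1 3)"
  unfolding Prp_def three by (auto intro: permutes_swap_id simp: crd_def sig2_def split: prod.splits)

lemma Prp_id: "Prp n id id"
  unfolding Prp_def by auto

lemma Bij_UNIV: "f \<in> Bij UNIV \<longleftrightarrow> bij f"
  by (simp add: Bij_def)

lemma BG_mult: "f \<in> Bij UNIV \<Longrightarrow> g \<in> Bij UNIV \<Longrightarrow> f \<otimes>\<^bsub>BijGroup UNIV\<^esub> g = f \<circ> g"
  by (simp add: BijGroup_def compose_def fun_eq_iff)

lemma BG_one: "\<one>\<^bsub>BijGroup UNIV\<^esub> = id"
  by (simp add: BijGroup_def fun_eq_iff)

lemma sig1_Bij: "sig1 \<in> Bij UNIV" unfolding Bij_UNIV by (rule involuntory_imp_bij) (rule sig1_inv)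
lemma sig2_Bij: "sig2 n \<in> Bij UNIV" unfolding Bij_UNIV by (rule involuntory_imp_bij) (rule sig2_inv)

lemma inv_inv_self:
  assumes "f \<in> Bij UNIV" "\<And>p. f (f p) = p"
  shows "inv\<^bsub>BijGroup UNIV\<^esub> f = f"
proof -
  interpret group "BijGroup UNIV" by (rule group_BijGroup)
  show ?thesis
    by (rule inv_equality) (use assms in \<open>simp_all add: BijGroup_def BG_mult fun_eq_iff compose_def\<close>)
qed

lemma gen_Prp:
  assumes "f \<in> generate (BijGroup UNIV) {sig1, sig2 n}"
  shows "f \<in> Bij UNIV \<and> (\<exists>\<pi>. Prp n f \<pi>)"
  using assms
proof (induction rule: generate.induct)
  case one
  then show ?case unfolding BG_one Bij_UNIV using Prp_id[of n] bij_id by blast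
next
  case (incl h)
  then show ?case using Prp_sig1[of n] Prp_sig2[of n] sig1_Bij sig2_Bij[of n] by blast
next
  case (inv h)
  then show ?case using Prp_sig1[of n] Prp_sig2[of n] sig1_Bij sig2_Bij[of n]
      inv_inv_self[OF sig1_Bij sig1_inv] inv_inv_self[OF sig2_Bij sig2_inv, of n] by auto
next
  case (eng h1 h2)
  then obtain p1 p2 where h: "h1 \<in> Bij UNIV" "h2 \<in> Bij UNIV" "Prp n h1 p1" "Prp n h2 p2" by blast
  have m: "h1 \<otimes>\<^bsub>BijGroup UNIV\<^esub> h2 = h1 \<circ> h2" using h(1,2) by (rule BG_mult)
  have "bij (h1 \<circ> h2)" using h(1,2) unfolding Bij_UNIV by (rule bij_comp[rotated])
  then show ?case unfolding m Bij_UNIV using Prp_comp[OF h(3,4)] by blast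
qed



lemma fun3:
  assumes "\<And>x. x \<notin> {1,2,3} \<Longrightarrow> \<sigma> x = x" "\<And>x. x \<notin> {1,2,3} \<Longrightarrow> \<tau> x = x"
    "\<sigma> 1 = \<tau> 1" "\<sigma> 2 = \<tau> 2" "\<sigma> 3 = \<tau> 3"
  shows "\<sigma> = (\<tau> :: nat \<Rightarrow> nat)"
proof
  fix x show "\<sigma> x = \<tau> x"
    using assms by (cases "x \<in> {1,2,3}") auto
qed

lemma tr_out: "x \<notin> {1,2,3} \<Longrightarrow> Transposition.transpose (1::nat) 2 x = x"
  "x \<notin> {1,2,3} \<Longrightarrow> Transposition.transpose (1::nat) 3 x = x"
  by (auto simp: Transposition.transpose_def)

lemma three_cases:
  fixes u v w :: nat
  assumes im: "u \<in> {1,2,3}" "v \<in> {1,2,3}" "w \<in> {1,2,3}" and inj: "u \<noteq> v" "u \<noteq> w" "v \<noteq> w"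
  shows "(u = 1 \<and> v = 2 \<and> w = 3) \<or> (u = 2 \<and> v = 1 \<and> w = 3) \<or>
    (u = 3 \<and> v = 2 \<and> w = 1) \<or> (u = 3 \<and> v = 1 \<and> w = 2) \<or>
    (u = 2 \<and> v = 3 \<and> w = 1) \<or> (u = 1 \<and> v = 3 \<and> w = 2)"
  using im inj
  apply (simp only: insert_iff empty_iff simp_thms)
  apply (elim disjE)
  apply simp_all
  done

lemma perm3:
  assumes "\<sigma> permutes {1..3::nat}"
  shows "\<sigma> \<in> {id, Transposition.transpose 1 2, Transposition.transpose 1 3,
     Transposition.transpose 1 2 \<circ> Transposition.transpose 1 3,
     Transposition.transpose 1 3 \<circ> Transposition.transpose 1 2,
     Transposition.transpose 1 2 \<circ> Transposition.transpose 1 3 \<circ> Transposition.transpose 1 2}"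
proof -
  let ?t12 = "Transposition.transpose (1::nat) 2" and ?t13 = "Transposition.transpose (1::nat) 3"
  have out: "\<And>x. x \<notin> {1,2,3} \<Longrightarrow> \<sigma> x = x"
  proof -
    fix x :: nat assume "x \<notin> {1,2,3}"
    then have "x \<notin> {1..3}" unfolding three .
    then show "\<sigma> x = x" by (rule permutes_not_in[OF assms])
  qed
  have im: "\<sigma> 1 \<in> {1,2,3}" "\<sigma> 2 \<in> {1,2,3}" "\<sigma> 3 \<in> {1,2,3}"
  proof -
    have "\<sigma> x \<in> {1..3}" if "x \<in> {1..3}" for x using permutes_in_image[OF assms, of x] that by blast
    then show "\<sigma> 1 \<in> {1,2,3}" "\<sigma> 2 \<in> {1,2,3}" "\<sigma> 3 \<in> {1,2,3}" unfolding three by simp_all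
  qed
  have inj: "\<sigma> 1 \<noteq> \<sigma> 2" "\<sigma> 1 \<noteq> \<sigma> 3" "\<sigma> 2 \<noteq> \<sigma> 3"
    using inj_eq[OF permutes_inj[OF assms]] by simp_all
  have c: "(\<sigma> 1 = 1 \<and> \<sigma> 2 = 2 \<and> \<sigma> 3 = 3) \<or> (\<sigma> 1 = 2 \<and> \<sigma> 2 = 1 \<and> \<sigma> 3 = 3) \<or>
    (\<sigma> 1 = 3 \<and> \<sigma> 2 = 2 \<and> \<sigma> 3 = 1) \<or> (\<sigma> 1 = 3 \<and> \<sigma> 2 = 1 \<and> \<sigma> 3 = 2) \<or>
    (\<sigma> 1 = 2 \<and> \<sigma> 2 = 3 \<and> \<sigma> 3 = 1) \<or> (\<sigma> 1 = 1 \<and> \<sigma> 2 = 3 \<and> \<sigma> 3 = 2)"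
    by (rule three_cases[OF im inj])
  have o1: "\<And>x. x \<notin> {1,2,3} \<Longrightarrow> id x = x" by simp
  have o2: "\<And>x. x \<notin> {1,2,3} \<Longrightarrow> ?t12 x = x" by (rule tr_out)
  have o3: "\<And>x. x \<notin> {1,2,3} \<Longrightarrow> ?t13 x = x" by (rule tr_out)
  have o4: "\<And>x. x \<notin> {1,2,3} \<Longrightarrow> (?t12 \<circ> ?t13) x = x" by (simp add: tr_out)
  have o5: "\<And>x. x \<notin> {1,2,3} \<Longrightarrow> (?t13 \<circ> ?t12) x = x" by (simp add: tr_out)
  have o6: "\<And>x. x \<notin> {1,2,3} \<Longrightarrow> (?t12 \<circ> ?t13 \<circ> ?t12) x = x" by (simp add: tr_out)
  from c show ?thesis
  proof (elim disjE conjE)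
    assume "\<sigma> 1 = 1" "\<sigma> 2 = 2" "\<sigma> 3 = 3"
    then have "\<sigma> = id" by (intro fun3[OF out o1]) simp_all
    then show ?thesis by simp
  next
    assume "\<sigma> 1 = 2" "\<sigma> 2 = 1" "\<sigma> 3 = 3"
    then have "\<sigma> = ?t12" by (intro fun3[OF out o2]) (simp_all add: Transposition.transpose_def)
    then show ?thesis by simp
  next
    assume "\<sigma> 1 = 3" "\<sigma> 2 = 2" "\<sigma> 3 = 1"
    then have "\<sigma> = ?t13" by (intro fun3[OF out o3]) (simp_all add: Transposition.transpose_def)
    then show ?thesis by simp
  next
    assume "\<sigma> 1 = 3" "\<sigma> 2 = 1" "\<sigma> 3 = 2"
    then have "\<sigma> = ?t12 \<circ> ?t13" by (intro fun3[OF out o4]) (simp_all add: Transposition.transpose_def)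
    then show ?thesis by simp
  next
    assume "\<sigma> 1 = 2" "\<sigma> 2 = 3" "\<sigma> 3 = 1"
    then have "\<sigma> = ?t13 \<circ> ?t12" by (intro fun3[OF out o5]) (simp_all add: Transposition.transpose_def)
    then show ?thesis by simp
  next
    assume "\<sigma> 1 = 1" "\<sigma> 2 = 3" "\<sigma> 3 = 2"
    then have "\<sigma> = ?t12 \<circ> ?t13 \<circ> ?t12" by (intro fun3[OF out o6]) (simp_all add: Transposition.transpose_def)
    then show ?thesis by simp
  qed
qed

definition phi :: "nat \<Rightarrow> (complex \<times> complex \<Rightarrow> complex \<times> complex) \<Rightarrow> nat \<Rightarrow> nat" where
  "phi n f = (SOME \<pi>. Prp n f \<pi>)"

lemma phi_Prp: "f \<in> generate (BijGroup UNIV) {sig1, sig2 n} \<Longrightarrow> Prp n f (phi n f)"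
  unfolding phi_def using gen_Prp by (metis someI_ex)

lemma phi_eq: "f \<in> generate (BijGroup UNIV) {sig1, sig2 n} \<Longrightarrow> Prp n f \<pi> \<Longrightarrow> phi n f = \<pi>"
  using gen_Prp[of f n] phi_Prp[of f n] Prp_unique unfolding Bij_UNIV bij_def by metis


lemma gen_mult: "f \<in> generate (BijGroup UNIV) {sig1, sig2 n} \<Longrightarrow> g \<in> generate (BijGroup UNIV) {sig1, sig2 n}
   \<Longrightarrow> f \<otimes>\<^bsub>BijGroup UNIV\<^esub> g = f \<circ> g"
  using gen_Prp BG_mult by blast

lemma part4:
  "(BijGroup (UNIV :: (complex \<times> complex) set))
       \<lparr>carrier := generate (BijGroup UNIV) {sig1, sig2 n}\<rparr> \<cong> sym_group 3"
proof (rule is_isoI)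
  let ?G = "generate (BijGroup (UNIV :: (complex \<times> complex) set)) {sig1, sig2 n}"
  let ?H = "(BijGroup (UNIV :: (complex \<times> complex) set))\<lparr>carrier := ?G\<rparr>"
  have car: "phi n f \<in> carrier (sym_group 3)" if "f \<in> ?G" for f
    using phi_Prp[OF that] unfolding Prp_def sym_group_carrier by blast
  have hom: "phi n \<in> hom ?H (sym_group 3)"
  proof (rule homI)
    fix f assume "f \<in> carrier ?H" then show "phi n f \<in> carrier (sym_group 3)" using car by simp
  next
    fix f g assume f: "f \<in> carrier ?H" and g: "g \<in> carrier ?H"
    then have f': "f \<in> ?G" and g': "g \<in> ?G" by simp_all
    have m: "f \<otimes>\<^bsub>?H\<^esub> g = f \<circ> g" using gen_mult[OF f' g'] by simp
    have fg: "f \<circ> g \<in> ?G" using generate.eng[OF f' g'] gen_mult[OF f' g'] by simp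
    show "phi n (f \<otimes>\<^bsub>?H\<^esub> g) = phi n f \<otimes>\<^bsub>sym_group 3\<^esub> phi n g"
      unfolding m sym_group_mult
      by (rule phi_eq[OF fg Prp_comp[OF phi_Prp[OF f'] phi_Prp[OF g']]])
  qed
  have inj: "inj_on (phi n) ?G"
  proof (rule inj_onI)
    fix f g assume f: "f \<in> ?G" and g: "g \<in> ?G" and e: "phi n f = phi n g"
    show "f = g" using Prp_inj phi_Prp[OF f] phi_Prp[OF g] e by metis
  qed
  have s1: "sig1 \<in> ?G" and s2: "sig2 n \<in> ?G" by (auto intro: generate.incl)
  have s12: "sig1 \<circ> sig2 n \<in> ?G" using generate.eng[OF s1 s2] gen_mult[OF s1 s2] by simp
  have s21: "sig2 n \<circ> sig1 \<in> ?G" using generate.eng[OF s2 s1] gen_mult[OF s2 s1] by simp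
  have s121: "sig1 \<circ> sig2 n \<circ> sig1 \<in> ?G" using generate.eng[OF s12 s1] gen_mult[OF s12 s1] by simp
  have e0: "id \<in> ?G" using generate.one[of "BijGroup UNIV"] BG_one by metis
  let ?t12 = "Transposition.transpose (1::nat) 2" and ?t13 = "Transposition.transpose (1::nat) 3"
  have p0: "phi n id = id" by (rule phi_eq[OF e0 Prp_id])
  have p1: "phi n sig1 = ?t12" by (rule phi_eq[OF s1 Prp_sig1])
  have p2: "phi n (sig2 n) = ?t13" by (rule phi_eq[OF s2 Prp_sig2])
  have p12: "phi n (sig1 \<circ> sig2 n) = ?t12 \<circ> ?t13" by (rule phi_eq[OF s12 Prp_comp[OF Prp_sig1 Prp_sig2]])
  have p21: "phi n (sig2 n \<circ> sig1) = ?t13 \<circ> ?t12" by (rule phi_eq[OF s21 Prp_comp[OF Prp_sig2 Prp_sig1]])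
  have p121: "phi n (sig1 \<circ> sig2 n \<circ> sig1) = ?t12 \<circ> ?t13 \<circ> ?t12"
    by (rule phi_eq[OF s121 Prp_comp[OF Prp_comp[OF Prp_sig1 Prp_sig2] Prp_sig1]])
  have img: "phi n ` ?G = carrier (sym_group 3)"
  proof
    show "phi n ` ?G \<subseteq> carrier (sym_group 3)" using car by blast
  next
    show "carrier (sym_group 3) \<subseteq> phi n ` ?G"
    proof
      fix \<sigma> assume "\<sigma> \<in> carrier (sym_group 3)"
      then have "\<sigma> permutes {1..3}" by (simp add: sym_group_carrier)
      from perm3[OF this] show "\<sigma> \<in> phi n ` ?G"
        using e0 s1 s2 s12 s21 s121 p0 p1 p2 p12 p21 p121 by (metis (no_types, lifting) image_eqI insertE empty_iff)
    qed
  qed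
  show "phi n \<in> iso ?H (sym_group 3)"
    unfolding iso_iff using hom inj img by simp
qed


theorem mainTheorem7:
  fixes n :: nat
  shows
   "(\<forall>a c. lower_ok (1 + a - c) \<and> lower_ok c \<and> lower_ok (1 - a - of_nat n) \<longrightarrow>
        F32 n (a/2) ((a+1)/2) (1 + a - c) c 4
        = (-1) ^ n * pochhammer a n / pochhammer (1 + a - c) n
          * F32 n ((c - a - of_nat n)/2) ((c - a - of_nat n + 1)/2) (1 - a - of_nat n) c 4)
  \<and> (\<forall>a c. lower_ok (1 + a - c) \<and> lower_ok c \<longrightarrow>
        Tt n a c = pochhammer (1 + a - c) n * pochhammer c n * F32 n (a/2) ((a+1)/2) (1 + a - c) c 4)
  \<and> (\<forall>a c. Tt n a c = Tt n (c - a - of_nat n) c)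
  \<and> (BijGroup (UNIV :: (complex \<times> complex) set))
       \<lparr>carrier := generate (BijGroup UNIV) {sig1, sig2 n}\<rparr> \<cong> sym_group 3
  \<and> (\<forall>a c. Tt n a c = Tt n a (1 + a - c)
         \<and> Tt n a c = Tt n (c - a - of_nat n) c
         \<and> Tt n a c = Tt n (c - a - of_nat n) (1 - a - of_nat n)
         \<and> Tt n a c = Tt n (1 - c - of_nat n) (1 + a - c)
         \<and> Tt n a c = Tt n (1 - c - of_nat n) (1 - a - of_nat n))
  \<and> (\<forall>x y z. Ut n x y z = Ut n x z y \<and> Ut n x y z = Ut n y x z \<and> Ut n x y z = Ut n y z x
         \<and> Ut n x y z = Ut n z x y \<and> Ut n x y z = Ut n z y x)"
proof (intro conjI allI impI)
  fix a c
  assume h: "lower_ok (1 + a - c) \<and> lower_ok c \<and> lower_ok (1 - a - of_nat n)"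
  then show "F32 n (a/2) ((a+1)/2) (1 + a - c) c 4
        = (-1) ^ n * pochhammer a n / pochhammer (1 + a - c) n
          * F32 n ((c - a - of_nat n)/2) ((c - a - of_nat n + 1)/2) (1 - a - of_nat n) c 4"
    using part1 by blast
next
  fix a c
  assume h: "lower_ok (1 + a - c) \<and> lower_ok c"
  then show "Tt n a c = pochhammer (1 + a - c) n * pochhammer c n * F32 n (a/2) ((a+1)/2) (1 + a - c) c 4"
    using Tt_F32 by blast
next
  fix a c show "Tt n a c = Tt n (c - a - of_nat n) c" by (rule Tt_sym2)
next
  show "(BijGroup (UNIV :: (complex \<times> complex) set))
       \<lparr>carrier := generate (BijGroup UNIV) {sig1, sig2 n}\<rparr> \<cong> sym_group 3" by (rule part4)
qed (use part5 part6 in blast)+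

end
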